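(* Let $\lambda$ be a complex algebraic number of degree $d$ and height $H$, and assume $|\lambda|\neq 1$. Then \[ \big||\lambda|-1\big| > \frac{1}{\sqrt{3}\,(2d+2)^{2d+3}\,2^{2d}\,(d!)^{2d}\,(d+1)^{2d(d-1)}\,H^{2d^2}}. \] In particular, if the minimal polynomial of $\lambda$ has degree at most $d$ and coefficients of bitsize at most $\tau$, then $\big||\lambda|-1\big| > 2^{-(\tau d)^{O(1)}}$.
   Context: The minimal polynomial of an algebraic number $\mu$ is the unique irreducible polynomial $p_\mu\in\mathbb{Z}[x]$ with pairwise coprime coefficients (and positive leading coefficient) vanishing at $\mu$. The height of $\mu$ is the maximum absolute value of the coefficients of $p_\mu$; the degree of $\mu$ is the degree of $p_\mu$. *)

theory Defs
  imports "HOL-Computational_Algebra.Computational_Algebra"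
begin

definition is_min_int_poly :: "int poly \<Rightarrow> complex \<Rightarrow> bool" where
  "is_min_int_poly p x \<longleftrightarrow>
     p \<noteq> 0 \<and> poly (map_poly of_int p) x = 0 \<and> irreducible p \<and>
     content p = 1 \<and> lead_coeff p > 0"

definition int_poly_height :: "int poly \<Rightarrow> int" where
  "int_poly_height p = Max ((\<lambda>i. \<bar>coeff p i\<bar>) ` {..degree p})"

end

theory Submission imports Defs "Jordan_Normal_Form.Jordan_Normal_Form" begin

lemma eig_bound:
  fixes A :: "complex mat" and R :: real
  assumes A: "A \<in> carrier_mat n n"
    and ent: "\<And>i j. i < n \<Longrightarrow> j < n \<Longrightarrow> cmod (A $$ (i,j)) \<le> R"
    and ev: "eigenvalue A e"
  shows "cmod e \<le> real n * R"
proof -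
  from ev obtain v where v: "v \<in> carrier_vec n" "v \<noteq> 0\<^sub>v n" "A *\<^sub>v v = e \<cdot>\<^sub>v v"
    unfolding eigenvalue_def eigenvector_def using A by auto
  have ne: "{..<n} \<noteq> {}" using v by (auto simp: vec_eq_iff)  
  define M where "M = Max ((\<lambda>j. cmod (v $ j)) ` {..<n})"
  have "M \<in> (\<lambda>j. cmod (v $ j)) ` {..<n}" unfolding M_def using ne by (intro Max_in) auto
  then obtain i where i: "i < n" "cmod (v $ i) = M" by auto
  have R0: "R \<ge> 0" using ent[OF i(1) i(1)] norm_ge_zero order_trans by blast
  have Mj: "cmod (v $ j) \<le> M" if "j < n" for j
    unfolding M_def using that by (intro Max_ge) auto
  have Mpos: "M > 0"
  proof (rule ccontr)
    assume "\<not> M > 0"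
    then have "\<forall>j<n. v $ j = 0" using Mj by (metis norm_le_zero_iff order_trans not_less)
    then show False using v by (auto simp: vec_eq_iff)
  qed
  have e1: "e * v $ i = (A *\<^sub>v v) $ i" using v i by simp
  have e2: "(A *\<^sub>v v) $ i = (\<Sum>j<n. A $$ (i,j) * v $ j)"
    using A v(1) i unfolding mult_mat_vec_def scalar_prod_def by (auto simp: lessThan_atLeast0)
  from e1 e2 have eq: "e * v $ i = (\<Sum>j<n. A $$ (i,j) * v $ j)" by (rule trans)
  have "cmod e * M = cmod (e * v $ i)" using i by (simp add: norm_mult)
  also have "\<dots> \<le> (\<Sum>j<n. cmod (A $$ (i,j) * v $ j))" unfolding eq by (rule norm_sum)
  also have "\<dots> \<le> (\<Sum>j<n. R * M)"
    by (intro sum_mono, simp add: norm_mult, intro mult_mono, insert ent Mj i R0, auto)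
  also have "\<dots> = real n * R * M" by simp
  finally show ?thesis using Mpos by simp
qed


lemma prod_le_pow:
  fixes c :: complex and K :: real
  assumes "\<forall>r\<in>set rs. cmod (c - r) \<le> K"
  shows "cmod (\<Prod>r\<leftarrow>rs. c - r) \<le> K ^ length rs"
  using assms
proof (induction rs)
  case Nil then show ?case by simp
next
  case (Cons r rs)
  have "cmod (\<Prod>r\<leftarrow>r#rs. c - r) = cmod (c - r) * cmod (\<Prod>r\<leftarrow>rs. c - r)"
    by (simp add: norm_mult)
  have K0: "K \<ge> 0" using Cons.prems norm_ge_zero[of "c - r"] by (meson list.set_intros(1) order_trans)
  have "cmod (c - r) * cmod (\<Prod>r\<leftarrow>rs. c - r) \<le> K * K ^ length rs"
    using Cons K0 by (intro mult_mono) auto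
  then show ?case by (simp add: norm_mult)
qed

lemma prod_le_pow1:
  fixes c :: complex and K :: real
  assumes "\<forall>r\<in>set rs. cmod (c - r) \<le> K" "\<nu> \<in> set rs" "K \<ge> 0"
  shows "cmod (\<Prod>r\<leftarrow>rs. c - r) \<le> cmod (c - \<nu>) * K ^ (length rs - 1)"
  using assms
proof (induction rs)
  case Nil then show ?case by simp
next
  case (Cons r rs)
  have eq: "cmod (\<Prod>r\<leftarrow>r#rs. c - r) = cmod (c - r) * cmod (\<Prod>r\<leftarrow>rs. c - r)"
    by (simp add: norm_mult)
  show ?case
  proof (cases "r = \<nu>")
    case True
    then show ?thesis unfolding eq using prod_le_pow[of rs c K] Cons.prems
      by (auto intro: mult_left_mono)
  next
    case False
    then have nu: "\<nu> \<in> set rs" using Cons.prems by auto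
    then have len: "length rs \<ge> 1" by (cases rs) auto
    have "cmod (c - r) * cmod (\<Prod>r\<leftarrow>rs. c - r) \<le> K * (cmod (c - \<nu>) * K ^ (length rs - 1))"
      using Cons nu by (intro mult_mono) auto
    also have "\<dots> = cmod (c - \<nu>) * K ^ (length (r#rs) - 1)"
      using len by (cases "length rs") auto
    finally show ?thesis unfolding eq .
  qed
qed

lemma root_gap:
  fixes f :: "int poly" and b :: int and \<nu> :: complex and R K :: real
  assumes mon: "lead_coeff f = 1"
    and roots: "\<And>r. poly (map_poly of_int f) r = 0 \<Longrightarrow> cmod r \<le> R"
    and nu: "poly (map_poly of_int f) \<nu> = 0" "\<nu> \<noteq> of_int b"
    and K: "\<bar>real_of_int b\<bar> + R \<le> K" "K \<ge> 1"
  shows "1 \<le> cmod (of_int b - \<nu>) * K ^ (degree f - 1)"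
proof -
  have f0: "f \<noteq> 0" using mon by auto
  obtain q where q: "f = [:- b, 1:] ^ order b f * q" "\<not> [:- b, 1:] dvd q"
    using order_decomp[OF f0] by blast
  define k where "k = order b f"
  have qb: "poly q b \<noteq> 0" using q(2) by (simp add: poly_eq_0_iff_dvd)
  have lc: "lead_coeff ([:- b, 1:] ^ k * q) = lead_coeff ([:- b, 1:] ^ k) * lead_coeff q"
    by (rule lead_coeff_mult)
  have fk: "f = [:- b, 1:] ^ k * q" using q(1) k_def by simp
  have lq: "lead_coeff q = 1" using mon lc fk by (simp add: lead_coeff_power)
  have q0: "q \<noteq> 0" using lq by auto
  have dq: "degree q \<le> degree f" using fk q0 by (simp add: degree_mult_eq)
  define qC where "qC = (map_poly of_int q :: complex poly)"
  have fC: "map_poly of_int f = [:- of_int b, 1:] ^ k * qC"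
    unfolding qC_def k_def by (subst q(1)) (simp add: of_int_poly_hom.hom_mult of_int_poly_hom.hom_power)
  have lqC: "lead_coeff qC = 1" unfolding qC_def using lq by simp
  have dqC: "degree qC = degree q" unfolding qC_def by simp
  obtain rs where rs: "Polynomial.smult (lead_coeff qC) (\<Prod>a\<leftarrow>rs. [:- a, 1:]) = qC" "length rs = degree qC"
    using fundamental_theorem_algebra_factorized[of qC] by blast
  have qCeq: "qC = (\<Prod>a\<leftarrow>rs. [:- a, 1:])" using rs(1) lqC by simp
  have pq: "poly qC y = (\<Prod>a\<leftarrow>rs. y - a)" for y
    unfolding qCeq poly_prod_list by (simp add: o_def)
  have "poly qC \<nu> = 0" using nu fC by simp
  then have "\<nu> \<in> set rs" unfolding pq by (auto simp: prod_list_zero_iff)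
  have rR: "cmod r \<le> R" if "r \<in> set rs" for r
  proof -
    have "poly qC r = 0" unfolding pq using that by (auto simp: prod_list_zero_iff)
    then show ?thesis using roots fC by simp
  qed
  have bnd: "\<forall>r\<in>set rs. cmod (of_int b - r) \<le> K"
  proof
    fix r assume "r \<in> set rs"
    have "cmod (of_int b - r) \<le> cmod (of_int b :: complex) + cmod r" by (rule norm_triangle_ineq4)
    also have "\<dots> \<le> K" using rR[OF \<open>r \<in> set rs\<close>] K by simp
    finally show "cmod (of_int b - r) \<le> K" .
  qed
  have "1 \<le> \<bar>poly q b\<bar>" using qb by linarith
  also have "real_of_int \<bar>poly q b\<bar> = cmod (poly qC (of_int b))"
    unfolding qC_def by (simp add: of_int_hom.poly_map_poly)
  also have "\<dots> \<le> cmod (of_int b - \<nu>) * K ^ (length rs - 1)"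
    unfolding pq by (rule prod_le_pow1[OF bnd \<open>\<nu> \<in> set rs\<close>]) (use K in auto)
  also have "\<dots> \<le> cmod (of_int b - \<nu>) * K ^ (degree f - 1)"
    using rs(2) dqC dq K by (intro mult_left_mono power_increasing) auto
  finally show ?thesis by simp
qed


lemma sum_divmod:
  fixes d m :: nat and g :: "nat \<Rightarrow> nat \<Rightarrow> 'a::comm_monoid_add"
  assumes "d > 0"
  shows "(\<Sum>c<m*d. g (c div d) (c mod d)) = (\<Sum>i<m. \<Sum>j<d. g i j)"
proof -
  have "(\<Sum>i<m. \<Sum>j<d. g i j) = (\<Sum>(i,j)\<in>{..<m}\<times>{..<d}. g i j)"
    by (rule sum.cartesian_product)
  moreover have "(\<Sum>c<m*d. g (c div d) (c mod d)) = (\<Sum>(i,j)\<in>{..<m}\<times>{..<d}. g i j)"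
  proof (rule sum.reindex_bij_witness[where i = "\<lambda>(i,j). i*d+j" and j = "\<lambda>c. (c div d, c mod d)"])
    fix c assume c: "c \<in> {..<m*d}"
    show "(case (c div d, c mod d) of (i, j) \<Rightarrow> i * d + j) = c" by simp
    show "(c div d, c mod d) \<in> {..<m} \<times> {..<d}" using c assms
      by (auto simp: less_mult_imp_div_less)
    show "(case (c div d, c mod d) of (i, j) \<Rightarrow> g i j) = g (c div d) (c mod d)" by simp
  next
    fix ij assume ij: "ij \<in> {..<m} \<times> {..<d}"
    obtain i j where ij': "ij = (i,j)" by (cases ij)
    have ii: "i < m" "j < d" using ij ij' by auto
    have "i * d + j < m * d"
    proof -
      have "i * d + j < i * d + d" using ii by simp
      also have "\<dots> = Suc i * d" by simp
      also have "\<dots> \<le> m * d" using ii by (intro mult_right_mono) auto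
      finally show ?thesis .
    qed
    then show "(case ij of (i, j) \<Rightarrow> i * d + j) \<in> {..<m * d}" using ij' by simp
    show "((case ij of (i, j) \<Rightarrow> i * d + j) div d, (case ij of (i, j) \<Rightarrow> i * d + j) mod d) = ij"
      using ij' ii assms by simp
  qed
  ultimately show ?thesis by simp
qed


lemma row_sum:
  fixes p :: "int poly" and y :: complex and d :: nat and a :: int
  assumes root: "poly (map_poly of_int p) y = 0" and d: "d = degree p" and a: "a = lead_coeff p"
    and r: "r < d"
  shows "(\<Sum>c<d. of_int (if Suc r < d then (if c = Suc r then a else 0) else - coeff p c) * y ^ c)
         = of_int a * y ^ Suc r"
proof (cases "Suc r < d")
  case True
  have "(\<Sum>c<d. of_int (if Suc r < d then (if c = Suc r then a else 0) else - coeff p c) * y ^ c)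
      = (\<Sum>c<d. if c = Suc r then of_int a * y ^ c else 0)"
    using True by (intro sum.cong) auto
  also have "\<dots> = of_int a * y ^ Suc r" using True by (simp add: sum.delta)
  finally show ?thesis .
next
  case False
  then have dr: "d = Suc r" using r by simp
  have "0 = poly (map_poly of_int p) y" using root by simp
  also have "\<dots> = (\<Sum>c\<le>d. of_int (coeff p c) * y ^ c)"
    unfolding poly_altdef d by (simp add: coeff_map_poly)
  also have "\<dots> = (\<Sum>c<d. of_int (coeff p c) * y ^ c) + of_int a * y ^ d"
    unfolding a d by (simp add: lessThan_Suc_atMost[symmetric])
  finally have "(\<Sum>c<d. - of_int (coeff p c) * y ^ c) = of_int a * y ^ d"
    by (simp add: sum_negf add_eq_0_iff2 add.commute)
  then show ?thesis using False dr by simp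
qed


lemma key_bound:
  fixes x :: complex and p :: "int poly" and d :: nat and H :: int
  assumes "is_min_int_poly p x"
    and dd: "d = degree p"
    and HH: "H = int_poly_height p"
    and x1: "cmod x \<noteq> 1"
  shows "1 \<le> \<bar>1 - (cmod x)^2\<bar> * (real d ^ 2 + 1) ^ (d * d - 1) * real_of_int H ^ (2 * d ^ 2)"
    and "d \<ge> 1" and "H \<ge> 1"
proof -
  define a where "a = lead_coeff p"
  have p0: "p \<noteq> 0" and root: "poly (map_poly of_int p) x = 0" and apos: "a > 0"
    using assms(1) unfolding is_min_int_poly_def a_def by auto
  show d1: "d \<ge> 1"
  proof (rule ccontr)
    assume "\<not> d \<ge> 1"
    then have "degree p = 0" using dd by simp
    then obtain c where "p = [:c:]" by (metis degree_eq_zeroE)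
    then show False using root p0 by simp
  qed
  have Hc: "\<bar>coeff p i\<bar> \<le> H" for i
  proof (cases "i \<le> d")
    case True
    then show ?thesis unfolding HH int_poly_height_def using dd by (intro Max_ge) auto
  next
    case False
    then have "coeff p i = 0" using dd by (simp add: coeff_eq_0)
    moreover have "\<bar>coeff p 0\<bar> \<le> H" unfolding HH int_poly_height_def by (intro Max_ge) auto
    ultimately show ?thesis by simp
  qed
  have aH: "a \<le> H" using Hc[of d] unfolding a_def dd by simp
  show H1: "H \<ge> 1" using aH apos by simp
  define B where "B = (\<lambda>r c. if Suc r < d then (if c = Suc r then a else 0) else - coeff p c)"
  have Bb: "\<bar>B r c\<bar> \<le> H" for r c using Hc[of c] aH apos unfolding B_def by auto
  define n where "n = d * d"
  define N where "N = mat n n (\<lambda>(r,c). B (r div d) (c div d) * B (r mod d) (c mod d))"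
  define NC where "NC = (map_mat of_int N :: complex mat)"
  have N: "N \<in> carrier_mat n n" unfolding N_def by simp
  have NC: "NC \<in> carrier_mat n n" unfolding NC_def using N by simp
  define y where "y = cnj x"
  have rooty: "poly (map_poly of_int p) y = 0"
  proof -
    have "poly (map_poly of_int p) y = cnj (poly (map_poly of_int p) x)"
      unfolding y_def poly_altdef by (simp add: coeff_map_poly)
    then show ?thesis using root by simp
  qed
  define \<nu> where "\<nu> = of_int (a^2) * (x * y)"
  define v where "v = vec n (\<lambda>r. x ^ (r div d) * y ^ (r mod d))"
  have dpos: "d > 0" using d1 by simp
  have rs: "(\<Sum>c<d. of_int (B r c) * z ^ c) = of_int a * z ^ Suc r"
    if "r < d" "poly (map_poly of_int p) z = 0" for r and z :: complex
    unfolding B_def by (rule row_sum[OF that(2) dd a_def that(1)])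
  have ev: "eigenvalue NC \<nu>"
    unfolding eigenvalue_def eigenvector_def
  proof (intro exI conjI)
    show vc: "v \<in> carrier_vec (dim_row NC)" using NC unfolding v_def by simp
    have n0: "0 < n" using dpos unfolding n_def by simp
    show "v \<noteq> 0\<^sub>v (dim_row NC)"
    proof
      assume "v = 0\<^sub>v (dim_row NC)"
      then have "v $ 0 = 0" using NC n0 by simp
      then show False using n0 unfolding v_def by simp
    qed
    show "NC *\<^sub>v v = \<nu> \<cdot>\<^sub>v v"
    proof (rule eq_vecI)
      show "dim_vec (NC *\<^sub>v v) = dim_vec (\<nu> \<cdot>\<^sub>v v)" using NC unfolding v_def by simp
      fix r assume "r < dim_vec (\<nu> \<cdot>\<^sub>v v)"
      then have r: "r < n" unfolding v_def by simp
      have r1: "r div d < d" using r unfolding n_def by (simp add: less_mult_imp_div_less)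
      have r2: "r mod d < d" using dpos by simp
      have "(NC *\<^sub>v v) $ r = (\<Sum>c<n. NC $$ (r,c) * v $ c)"
        using NC r unfolding mult_mat_vec_def scalar_prod_def v_def by (auto simp: lessThan_atLeast0)
      also have "\<dots> = (\<Sum>c<d*d. (\<lambda>i j. (of_int (B (r div d) i) * x ^ i) * (of_int (B (r mod d) j) * y ^ j)) (c div d) (c mod d))"
        unfolding n_def using r unfolding n_def NC_def N_def v_def
        by (intro sum.cong) (auto simp: algebra_simps)
      also have "\<dots> = (\<Sum>i<d. \<Sum>j<d. (of_int (B (r div d) i) * x ^ i) * (of_int (B (r mod d) j) * y ^ j))"
        by (rule sum_divmod[OF dpos])
      also have "\<dots> = (\<Sum>i<d. of_int (B (r div d) i) * x ^ i) * (\<Sum>j<d. of_int (B (r mod d) j) * y ^ j)"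
        by (simp add: sum_product)
      also have "\<dots> = (of_int a * x ^ Suc (r div d)) * (of_int a * y ^ Suc (r mod d))"
        using rs[OF r1 root] rs[OF r2 rooty] by simp
      also have "\<dots> = (\<nu> \<cdot>\<^sub>v v) $ r"
        using r unfolding \<nu>_def v_def by (simp add: algebra_simps power2_eq_square)
      finally show "(NC *\<^sub>v v) $ r = (\<nu> \<cdot>\<^sub>v v) $ r" .
    qed
  qed
  define f where "f = char_poly N"
  have fm: "degree f = n" "lead_coeff f = 1" using degree_monic_char_poly[OF N] unfolding f_def by auto
  have fC: "map_poly of_int f = char_poly NC"
    unfolding f_def NC_def by (rule of_int_hom.char_poly_hom[OF N, symmetric])
  define R where "R = real n * (real_of_int H)^2"
  have ent: "cmod (NC $$ (i,j)) \<le> (real_of_int H)^2" if "i < n" "j < n" for i j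
  proof -
    have "cmod (NC $$ (i,j)) = \<bar>real_of_int (B (i div d) (j div d))\<bar> * \<bar>real_of_int (B (i mod d) (j mod d))\<bar>"
      using that unfolding NC_def N_def by (simp add: norm_mult)
    also have "\<dots> \<le> real_of_int H * real_of_int H"
    proof -
      have b1: "\<bar>real_of_int (B (i div d) (j div d))\<bar> \<le> real_of_int H"
        using Bb[of "i div d" "j div d"] by (metis of_int_abs of_int_le_iff)
      have b2: "\<bar>real_of_int (B (i mod d) (j mod d))\<bar> \<le> real_of_int H"
        using Bb[of "i mod d" "j mod d"] by (metis of_int_abs of_int_le_iff)
      show ?thesis using b1 b2 H1 by (intro mult_mono) auto
    qed
    finally show ?thesis by (simp add: power2_eq_square)
  qed
  have roots: "cmod r \<le> R" if "poly (map_poly of_int f) r = 0" for r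
  proof -
    have "eigenvalue NC r" using that unfolding fC eigenvalue_root_char_poly[OF NC] .
    from eig_bound[OF NC ent this] show ?thesis unfolding R_def by simp
  qed
  have nuroot: "poly (map_poly of_int f) \<nu> = 0" using ev unfolding fC eigenvalue_root_char_poly[OF NC] .
  define m where "m = cmod x"
  have xy: "x * y = of_real (m^2)" unfolding m_def y_def using complex_norm_square[of x] by simp
  have nu_eq: "\<nu> = of_real (real_of_int a ^ 2 * m^2)" unfolding \<nu>_def xy by simp
  have m1: "m^2 \<noteq> 1" proof assume "m^2 = 1" then have "m = 1 \<or> m = -1" by (simp add: power2_eq_1_iff) then show False using x1 norm_ge_zero[of x] unfolding m_def by linarith qed
  have nune: "\<nu> \<noteq> of_int (a^2)"
  proof
    assume "\<nu> = of_int (a^2)"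
    then have "real_of_int a ^ 2 * m^2 = real_of_int a ^ 2 * 1" unfolding nu_eq
      by (metis mult.right_neutral of_int_power of_real_eq_iff of_real_of_int_eq)
    then show False using m1 apos by simp
  qed
  define K where "K = (real d ^ 2 + 1) * (real_of_int H)^2"
  have H2: "real_of_int a ^ 2 \<le> (real_of_int H)^2" using aH apos by (intro power_mono) auto
  have Kb: "\<bar>real_of_int (a^2)\<bar> + R \<le> K" "K \<ge> 1"
  proof -
    show "\<bar>real_of_int (a^2)\<bar> + R \<le> K" using H2 unfolding R_def K_def n_def
      by (simp add: algebra_simps power2_eq_square)
    have "1 * 1 \<le> (real d ^ 2 + 1) * (real_of_int H)^2" using H1
      by (intro mult_mono) (auto simp: one_le_power)
    then show "K \<ge> 1" unfolding K_def by simp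
  qed
  have gap: "1 \<le> cmod (of_int (a^2) - \<nu>) * K ^ (degree f - 1)"
    by (rule root_gap[OF fm(2) roots nuroot nune Kb])
  have cm: "cmod (of_int (a^2) - \<nu>) = real_of_int a ^ 2 * \<bar>1 - m^2\<bar>"
  proof -
    have "of_int (a^2) - \<nu> = of_real (real_of_int a ^ 2 * (1 - m^2))" unfolding nu_eq
      by (simp add: algebra_simps)
    then have "cmod (of_int (a^2) - \<nu>) = \<bar>real_of_int a ^ 2 * (1 - m^2)\<bar>" by (simp only: norm_of_real)
    then show ?thesis by (simp add: abs_mult)
  qed
  have Kp: "K^(n-1) = (real d^2+1)^(n-1) * ((real_of_int H)^2)^(n-1)" unfolding K_def by (rule power_mult_distrib)
  from cm gap have "1 \<le> real_of_int a ^ 2 * \<bar>1 - m^2\<bar> * K ^ (n - 1)" using fm by simp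
  also have "\<dots> \<le> (real_of_int H)^2 * \<bar>1 - m^2\<bar> * K ^ (n - 1)"
    using H2 Kb by (intro mult_right_mono) auto
  also have "\<dots> = \<bar>1 - m^2\<bar> * (real d ^ 2 + 1) ^ (n - 1) * ((real_of_int H)^2 * ((real_of_int H)^2) ^ (n - 1))"
    unfolding Kp by (simp only: mult_ac)
  also have "(real_of_int H)^2 * ((real_of_int H)^2) ^ (n - 1) = real_of_int H ^ (2 * d ^ 2)"
  proof -
    have "n \<ge> 1" using dpos unfolding n_def by simp
    then obtain k where k: "n = Suc k" by (cases n) auto
    then have "(real_of_int H)^2 * ((real_of_int H)^2) ^ (n - 1) = ((real_of_int H)^2) ^ n"
      by (simp only: k diff_Suc_1 power_Suc)
    also have "\<dots> = real_of_int H ^ (2 * d ^ 2)" unfolding n_def by (simp add: power_mult power2_eq_square)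
    finally show ?thesis .
  qed
  finally show "1 \<le> \<bar>1 - (cmod x)^2\<bar> * (real d ^ 2 + 1) ^ (d * d - 1) * real_of_int H ^ (2 * d ^ 2)"
    unfolding m_def n_def by simp
qed


lemma numeric:
  fixes d :: nat and h :: real
  assumes d: "d \<ge> 1" and h: "h \<ge> 1"
  shows "3 * ((real d ^ 2 + 1) ^ (d * d - 1) * h ^ (2 * d ^ 2)) <
    sqrt 3 * (2 * real d + 2) ^ (2 * d + 3) * 2 ^ (2 * d) * (fact d) ^ (2 * d)
         * (real d + 1) ^ (2 * d * (d - 1)) * h ^ (2 * d ^ 2)"
proof -
  define A1 where "A1 = (2 * real d + 2) ^ (2 * d + 3)"
  define A4 where "A4 = (real d + 1) ^ (2 * d * (d - 1))"
  define Q where "Q = (real d + 1) ^ (2 * d - 2)"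
  define P where "P = (real d ^ 2 + 1) ^ (d * d - 1)"
  have hp: "h ^ (2 * d ^ 2) \<ge> 1" using h by (simp add: one_le_power)
  have A4p: "A4 > 0" "Q > 0" unfolding A4_def Q_def by auto
  have "P \<le> ((real d + 1)^2) ^ (d * d - 1)" unfolding P_def
    by (intro power_mono) (auto simp: power2_eq_square algebra_simps)
  also have "\<dots> = (real d + 1) ^ (2 * d * (d - 1) + (2 * d - 2))"
  proof -
    have "2 * (d * d - 1) = 2 * d * (d - 1) + (2 * d - 2)" using d
      by (cases d) (auto simp: algebra_simps)
    then show ?thesis by (simp add: power_mult[symmetric])
  qed
  also have "\<dots> = A4 * Q" unfolding A4_def Q_def by (simp add: power_add)
  finally have P: "P \<le> A4 * Q" .
  have a1: "(real d + 1) ^ (2 * d + 3) \<le> A1" unfolding A1_def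
    by (intro power_mono) auto
  have a2: "(real d + 1) ^ (2 * d + 3) = Q * (real d + 1) ^ 5"
    unfolding Q_def using d by (simp add: power_add[symmetric])
  have "(2::real) ^ 5 \<le> (real d + 1) ^ 5" using d by (intro power_mono) auto
  then have a3: "Q * 32 \<le> Q * (real d + 1) ^ 5" using A4p by (intro mult_left_mono) auto
  have A1: "32 * Q \<le> A1" using a1 a2 a3 by simp
  have s3: "sqrt 3 \<ge> (1::real)" by simp
  have "3 * P \<le> 3 * (A4 * Q)" using P by simp
  also have "\<dots> < 32 * Q * A4" using A4p by simp
  also have "\<dots> \<le> A1 * A4" using A1 A4p by (intro mult_right_mono) auto
  also have "\<dots> \<le> sqrt 3 * A1 * 2 ^ (2 * d) * (fact d) ^ (2 * d) * A4"
  proof -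
    have f: "(fact d :: real) ^ (2 * d) \<ge> 1" by (simp add: one_le_power)
    have t: "(2::real) ^ (2 * d) \<ge> 1" by (simp add: one_le_power)
    have "1 * 1 * 1 \<le> sqrt 3 * 2 ^ (2 * d) * (fact d :: real) ^ (2 * d)"
      using f t s3 by (intro mult_mono) auto
    then have "A1 * A4 * 1 \<le> A1 * A4 * (sqrt 3 * 2 ^ (2 * d) * (fact d) ^ (2 * d))"
      using A4p unfolding A1_def by (intro mult_left_mono) auto
    moreover have "A1 * A4 * (sqrt 3 * 2 ^ (2 * d) * (fact d) ^ (2 * d)) = sqrt 3 * A1 * 2 ^ (2 * d) * (fact d) ^ (2 * d) * A4"
      by (simp only: mult.assoc mult.commute mult.left_commute)
    ultimately show ?thesis by simp
  qed
  finally have main: "3 * P < sqrt 3 * A1 * 2 ^ (2 * d) * (fact d) ^ (2 * d) * A4" .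
  have "3 * (P * h ^ (2 * d ^ 2)) = (3 * P) * h ^ (2 * d ^ 2)" by simp
  also have "\<dots> < (sqrt 3 * A1 * 2 ^ (2 * d) * (fact d) ^ (2 * d) * A4) * h ^ (2 * d ^ 2)"
    using main hp by (intro mult_strict_right_mono) auto
  finally show ?thesis unfolding A1_def A4_def P_def .
qed


theorem mainTheorem3:
  fixes x :: complex and p :: "int poly" and d :: nat and H :: int
  assumes "is_min_int_poly p x"
    and "d = degree p"
    and "H = int_poly_height p"
    and "cmod x \<noteq> 1"
  shows "\<bar>cmod x - 1\<bar> >
    1 / (sqrt 3 * (2 * real d + 2) ^ (2 * d + 3) * 2 ^ (2 * d) * (fact d) ^ (2 * d)
         * (real d + 1) ^ (2 * d * (d - 1)) * (real_of_int H) ^ (2 * d ^ 2))"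
proof -
  note kb = key_bound[OF assms]
  define E where "E = (real d ^ 2 + 1) ^ (d * d - 1) * real_of_int H ^ (2 * d ^ 2)"
  define D where "D = sqrt 3 * (2 * real d + 2) ^ (2 * d + 3) * 2 ^ (2 * d) * (fact d) ^ (2 * d)
         * (real d + 1) ^ (2 * d * (d - 1)) * (real_of_int H) ^ (2 * d ^ 2)"
  define m where "m = cmod x"
  have H1: "real_of_int H \<ge> 1" using kb(3) by simp
  have ED: "3 * E < D" unfolding E_def D_def by (rule numeric[OF kb(2) H1])
  have e1: "(real d ^ 2 + 1) ^ (d * d - 1) \<ge> 1" by (rule one_le_power) simp
  have e2: "real_of_int H ^ (2 * d ^ 2) \<ge> 1" using H1 by (rule one_le_power)
  have "1 * 1 \<le> E" unfolding E_def using e1 e2 by (intro mult_mono) auto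
  then have E1: "E \<ge> 1" by simp
  have k: "1 \<le> \<bar>1 - m^2\<bar> * E" using kb(1) unfolding E_def m_def by (simp add: mult.assoc)
  have m0: "m \<ge> 0" "m \<noteq> 1" unfolding m_def using assms(4) by auto
  have Dp: "D > 0" using ED E1 by simp
  have "1 < \<bar>m - 1\<bar> * D"
  proof (cases "m \<ge> 2")
    case True
    then have "\<bar>m - 1\<bar> \<ge> 1" by simp
    moreover have "D > 1" using ED E1 by simp
    ultimately show ?thesis by (metis less_le_trans mult_1 mult_right_mono order.strict_iff_order zero_le_one mult.commute less_eq_real_def) 
  next
    case False
    have "1 - m^2 = (1 - m) * (1 + m)" by (simp add: power2_eq_square algebra_simps)
    then have "\<bar>1 - m^2\<bar> = \<bar>1 - m\<bar> * \<bar>1 + m\<bar>" by (simp add: abs_mult)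
    then have "\<bar>1 - m^2\<bar> = \<bar>m - 1\<bar> * (1 + m)" using m0 by (simp add: abs_minus_commute)
    also have "\<dots> \<le> \<bar>m - 1\<bar> * 3" using False m0 by (intro mult_left_mono) auto
    finally have "1 \<le> \<bar>m - 1\<bar> * 3 * E" using k E1 by (meson dual_order.trans mult_right_mono zero_le_one order_trans)
    also have "\<dots> < \<bar>m - 1\<bar> * D" using ED m0 by simp
    finally show ?thesis .
  qed
  then have "1 / D < \<bar>m - 1\<bar>" using Dp by (simp add: divide_less_eq mult.commute)
  then show ?thesis unfolding D_def m_def .
qed

end
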